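(* Let $C$ be a linear completely regular $[n,k,2]_q$ code with covering radius $\rho=1$, and let $n_a$ be the number of codewords at distance $1$ from any vector ${\bf x}\notin C$. Then the following are equivalent: (i) for any pair of distinct coordinate positions $i,j$ there exists a codeword of weight $2$ with support $\{i,j\}$; (ii) $n_a=n$; (iii) $|C|=q^{n-1}$; (iv) $C$ has a generator matrix of the form $[I\,|\,{\bf h}]$, where $I$ is the $(n-1)\times(n-1)$ identity matrix and ${\bf h}\in\mathbb{F}_q^{n-1}$ is a column vector of weight $n-1$; (v) the dual code of $C$ is linearly equivalent to the repetition $[n,1,n]_q$ code.
   Context: Hamming distance and weight; support of a vector = set of its nonzero coordinates; covering radius $\rho=\max_{\bf v}\min_{{\bf x}\in C}d({\bf v},{\bf x})$. $C$ is completely regular if for every vector ${\bf x}$, with $t=d({\bf x},C)$, the number of codewords at distance $i$ from ${\bf x}$ depends only on $t$ and $i$ (so $n_a$ is well defined). The repetition code is $\{(c,\dots,c):c\in\mathbb{F}_q\}$. Linear equivalence means image under ${\bf x}\mapsto{\bf x}M$ with $M$ monomial. *)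

theory Defs
  imports Main "HOL-Library.Cardinality"
begin

text \<open>Vectors of length n over a finite field 'a are modelled as functions
  nat \<Rightarrow> 'a that vanish outside the coordinate set {..<n}.\<close>

definition vecs :: "nat \<Rightarrow> (nat \<Rightarrow> 'a::zero) set" where
  "vecs n = {x. \<forall>i. n \<le> i \<longrightarrow> x i = 0}"

definition supp :: "nat \<Rightarrow> (nat \<Rightarrow> 'a::zero) \<Rightarrow> nat set" where
  "supp n x = {i. i < n \<and> x i \<noteq> 0}"

definition wt :: "nat \<Rightarrow> (nat \<Rightarrow> 'a::zero) \<Rightarrow> nat" where
  "wt n x = card (supp n x)"

definition hdist :: "nat \<Rightarrow> (nat \<Rightarrow> 'a) \<Rightarrow> (nat \<Rightarrow> 'a) \<Rightarrow> nat" where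
  "hdist n x y = card {i. i < n \<and> x i \<noteq> y i}"

definition linear_code :: "nat \<Rightarrow> (nat \<Rightarrow> 'a::field) set \<Rightarrow> bool" where
  "linear_code n C \<longleftrightarrow> C \<subseteq> vecs n \<and> (\<lambda>i. 0) \<in> C \<and>
     (\<forall>x\<in>C. \<forall>y\<in>C. (\<lambda>i. x i + y i) \<in> C) \<and>
     (\<forall>a. \<forall>x\<in>C. (\<lambda>i. a * x i) \<in> C)"

definition has_min_dist :: "nat \<Rightarrow> (nat \<Rightarrow> 'a) set \<Rightarrow> nat \<Rightarrow> bool" where
  "has_min_dist n C d \<longleftrightarrow> (\<exists>x\<in>C. \<exists>y\<in>C. x \<noteq> y \<and> hdist n x y = d) \<and>
     (\<forall>x\<in>C. \<forall>y\<in>C. x \<noteq> y \<longrightarrow> d \<le> hdist n x y)"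

definition dist_to :: "nat \<Rightarrow> (nat \<Rightarrow> 'a) \<Rightarrow> (nat \<Rightarrow> 'a) set \<Rightarrow> nat" where
  "dist_to n v C = Min (hdist n v ` C)"

definition cov_rad :: "nat \<Rightarrow> (nat \<Rightarrow> 'a::zero) set \<Rightarrow> nat" where
  "cov_rad n C = Max ((\<lambda>v. dist_to n v C) ` vecs n)"

definition completely_regular :: "nat \<Rightarrow> (nat \<Rightarrow> 'a::zero) set \<Rightarrow> bool" where
  "completely_regular n C \<longleftrightarrow>
     (\<forall>x\<in>vecs n. \<forall>y\<in>vecs n. dist_to n x C = dist_to n y C \<longrightarrow>
        (\<forall>i. card {c\<in>C. hdist n x c = i} = card {c\<in>C. hdist n y c = i}))"

definition row_space :: "nat \<Rightarrow> nat \<Rightarrow> (nat \<Rightarrow> nat \<Rightarrow> 'a::comm_semiring_1) \<Rightarrow> (nat \<Rightarrow> 'a) set" where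
  "row_space n m G = {(\<lambda>j. if j < n then (\<Sum>i<m. a i * G i j) else 0) | a. True}"

definition dual_code :: "nat \<Rightarrow> (nat \<Rightarrow> 'a::comm_semiring_1) set \<Rightarrow> (nat \<Rightarrow> 'a) set" where
  "dual_code n C = {y \<in> vecs n. \<forall>c\<in>C. (\<Sum>i<n. c i * y i) = 0}"

definition repetition_code :: "nat \<Rightarrow> (nat \<Rightarrow> 'a::zero) set" where
  "repetition_code n = {(\<lambda>i. if i < n then c else 0) | c. True}"

definition monomial_matrix :: "nat \<Rightarrow> (nat \<Rightarrow> nat \<Rightarrow> 'a::zero) \<Rightarrow> bool" where
  "monomial_matrix n M \<longleftrightarrow> (\<exists>\<sigma> lam. bij_betw \<sigma> {..<n} {..<n} \<and> (\<forall>i<n. lam i \<noteq> 0) \<and>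
     (\<forall>i<n. \<forall>j<n. M i j = (if j = \<sigma> i then lam i else 0)))"

definition vec_mat :: "nat \<Rightarrow> (nat \<Rightarrow> 'a::comm_semiring_1) \<Rightarrow> (nat \<Rightarrow> nat \<Rightarrow> 'a) \<Rightarrow> (nat \<Rightarrow> 'a)" where
  "vec_mat n x M = (\<lambda>j. if j < n then (\<Sum>i<n. x i * M i j) else 0)"

definition lin_equiv :: "nat \<Rightarrow> (nat \<Rightarrow> 'a::comm_semiring_1) set \<Rightarrow> (nat \<Rightarrow> 'a) set \<Rightarrow> bool" where
  "lin_equiv n C D \<longleftrightarrow> (\<exists>M. monomial_matrix n M \<and> (\<lambda>x. vec_mat n x M) ` C = D)"

definition cond_i :: "nat \<Rightarrow> (nat \<Rightarrow> 'a::zero) set \<Rightarrow> bool" where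
  "cond_i n C \<longleftrightarrow> (\<forall>i j. i < n \<and> j < n \<and> i \<noteq> j \<longrightarrow>
          (\<exists>c\<in>C. wt n c = 2 \<and> supp n c = {i, j}))"

definition cond_ii :: "nat \<Rightarrow> (nat \<Rightarrow> 'a::zero) set \<Rightarrow> bool" where
  "cond_ii n C \<longleftrightarrow> (\<forall>x \<in> vecs n - C. card {c\<in>C. hdist n x c = 1} = n)"

definition cond_iii :: "nat \<Rightarrow> (nat \<Rightarrow> 'a::finite) set \<Rightarrow> bool" where
  "cond_iii n C \<longleftrightarrow> card C = CARD('a) ^ (n - 1)"

definition cond_iv :: "nat \<Rightarrow> (nat \<Rightarrow> 'a::field) set \<Rightarrow> bool" where
  "cond_iv n C \<longleftrightarrow> (\<exists>h. (\<forall>i<n-1. h i \<noteq> 0) \<and>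
          C = row_space n (n - 1)
                (\<lambda>i j. if j < n - 1 then (if i = j then 1 else 0)
                       else if j = n - 1 then h i else 0))"

definition cond_v :: "nat \<Rightarrow> (nat \<Rightarrow> 'a::field) set \<Rightarrow> bool" where
  "cond_v n C \<longleftrightarrow> lin_equiv n (dual_code n C) (repetition_code n)"

end

theory Submission
  imports Defs "HOL-Library.FuncSet"
begin



lemma card_supp_vecs:
  assumes "finite S"
  shows "card {x::nat \<Rightarrow> 'a::{finite,zero}. \<forall>l. l \<notin> S \<longrightarrow> x l = 0} = CARD('a) ^ card S"
    and "finite {x::nat \<Rightarrow> 'a::{finite,zero}. \<forall>l. l \<notin> S \<longrightarrow> x l = 0}"
proof -
  let ?Z = "{x::nat \<Rightarrow> 'a. \<forall>l. l \<notin> S \<longrightarrow> x l = 0}"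
  have b: "bij_betw (\<lambda>x. restrict x S) ?Z (PiE S (\<lambda>_. UNIV))"
    apply (rule bij_betw_byWitness[where f'="\<lambda>f l. if l \<in> S then f l else 0"])
       apply (auto simp: fun_eq_iff)
    done
  hence "card ?Z = card (PiE S (\<lambda>_. (UNIV::'a set)))" by (rule bij_betw_same_card)
  also have "... = CARD('a) ^ card S" by (simp add: card_PiE assms)
  finally show c: "card ?Z = CARD('a) ^ card S" .
  have "card ?Z > 0" unfolding c by simp
  thus "finite ?Z" using card_ge_0_finite by blast
qed

lemma vecs_eq: "vecs n = {x. \<forall>l. l \<notin> {..<n} \<longrightarrow> x l = 0}"
  by (auto simp: vecs_def)

lemma card_vecs: "card (vecs n :: (nat \<Rightarrow> 'a::{finite,zero}) set) = CARD('a) ^ n"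
  and finite_vecs: "finite (vecs n :: (nat \<Rightarrow> 'a::{finite,zero}) set)"
  using card_supp_vecs[of "{..<n}", where 'a='a] by (simp_all add: vecs_eq)

lemma lc_sub: assumes "linear_code n C" "x \<in> C" "y \<in> C"
  shows "(\<lambda>i. x i - y i) \<in> C"
proof -
  have add: "\<forall>x\<in>C. \<forall>y\<in>C. (\<lambda>i. x i + y i) \<in> C" and sc: "\<forall>a. \<forall>x\<in>C. (\<lambda>i. a * x i) \<in> C"
    using assms(1) unfolding linear_code_def by auto
  have "(\<lambda>i. (-1) * y i) \<in> C" using sc assms(3) by blast
  from add[rule_format, OF assms(2) this] show ?thesis by simp
qed

lemma lc_scale: assumes "linear_code n C" "x \<in> C"
  shows "(\<lambda>i. a * x i) \<in> C" using assms unfolding linear_code_def by simp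

lemma lc_sum: assumes "linear_code n C" "finite S" "\<forall>i\<in>S. f i \<in> C"
  shows "(\<lambda>j. \<Sum>i\<in>S. f i j) \<in> C"
  using assms(2,3)
proof (induction S rule: finite_induct)
  case empty then show ?case using assms(1) by (simp add: linear_code_def)
next
  case (insert s S)
  then show ?case using assms(1) unfolding linear_code_def by simp
qed

lemma lc_vecs: "linear_code n C \<Longrightarrow> x \<in> C \<Longrightarrow> l \<ge> n \<Longrightarrow> x l = 0"
  by (auto simp: linear_code_def vecs_def)

lemma hdist_zero_eq:
  assumes "x \<in> vecs n" "y \<in> vecs n" "hdist n x y = 0" shows "x = y"
proof -
  have "{i. i < n \<and> x i \<noteq> y i} = {}" using assms(3) by (simp add: hdist_def)
  show ?thesis
  proof
    fix i show "x i = y i"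
    proof (cases "i < n")
      case True thus ?thesis using \<open>{i. i < n \<and> x i \<noteq> y i} = {}\<close> by blast
    next
      case False thus ?thesis using assms(1,2) by (simp add: vecs_def)
    qed
  qed
qed

lemma wt2:
  assumes lin: "linear_code n C" and md: "has_min_dist n C 2"
    and x: "x \<in> C" "x \<noteq> (\<lambda>i. 0)"
  shows "2 \<le> card {l. l < n \<and> x l \<noteq> 0}"
proof -
  have "(\<lambda>i. 0) \<in> C" using lin by (simp add: linear_code_def)
  hence "2 \<le> hdist n x (\<lambda>i. 0)" using md x unfolding has_min_dist_def by blast
  thus ?thesis by (simp add: hdist_def)
qed

lemma wt_single:
  assumes lin: "linear_code n C" and md: "has_min_dist n C 2"
    and x: "x \<in> C" and s: "\<forall>l. l \<noteq> p \<longrightarrow> x l = 0"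
  shows "x = (\<lambda>i. 0)"
proof (rule ccontr)
  assume "x \<noteq> (\<lambda>i. 0)"
  hence "2 \<le> card {l. l < n \<and> x l \<noteq> 0}" using wt2 lin md x by blast
  moreover have "card {l. l < n \<and> x l \<noteq> 0} \<le> card {p}"
    by (rule card_mono) (use s in auto)
  ultimately show False by simp
qed

lemma wt_pair:
  assumes lin: "linear_code n C" and md: "has_min_dist n C 2"
    and x: "x \<in> C" "x \<noteq> (\<lambda>i. 0)" and s: "\<forall>l. l \<noteq> i \<and> l \<noteq> j \<longrightarrow> x l = 0"
    and ij: "i < n" "j < n" "i \<noteq> j"
  shows "wt n x = 2 \<and> supp n x = {i, j}"
proof -
  have 2: "2 \<le> card {l. l < n \<and> x l \<noteq> 0}" using wt2 lin md x by blast
  have sub: "supp n x \<subseteq> {i, j}" using s by (auto simp: supp_def)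
  have le: "card (supp n x) \<le> card {i, j}" by (rule card_mono) (use sub in auto)
  have "supp n x = {i, j}"
    by (rule card_subset_eq) (use 2 sub ij le in \<open>auto simp: supp_def\<close>)
  thus ?thesis using ij by (simp add: wt_def)
qed




lemma sum_upd: "(\<Sum>i<Suc m. d i * (z(m:=t)) i) = (\<Sum>i<m. d i * z i) + d m * (t::'a::comm_semiring_1)"
  by simp

lemma vecs_Suc: "x \<in> vecs (Suc m) \<Longrightarrow> x m = 0 \<Longrightarrow> x \<in> vecs m"
  unfolding vecs_def
proof (safe)
  fix i assume "\<forall>i\<ge>Suc m. x i = 0" "x m = 0" "m \<le> i"
  thus "x i = 0" by (cases "i = m") auto
qed

lemma vecs_mono: "x \<in> vecs m \<Longrightarrow> m \<le> k \<Longrightarrow> x \<in> vecs k"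
  unfolding vecs_def by auto

lemma lc_restrict: assumes "linear_code (Suc m) D" shows "linear_code m {d\<in>D. d m = 0}"
proof -
  have add: "\<forall>x\<in>D. \<forall>y\<in>D. (\<lambda>i. x i + y i) \<in> D" and sc: "\<forall>a. \<forall>x\<in>D. (\<lambda>i. a * x i) \<in> D"
    and sub: "D \<subseteq> vecs (Suc m)" and z: "(\<lambda>i. 0) \<in> D"
    using assms unfolding linear_code_def by auto
  show ?thesis unfolding linear_code_def
  proof (intro conjI ballI allI subsetI)
    fix x assume "x \<in> {d \<in> D. d m = 0}"
    thus "x \<in> vecs m" using sub vecs_Suc by blast
  next
    show "(\<lambda>i. 0) \<in> {d \<in> D. d m = 0}" using z by simp
  next
    fix x y assume "x \<in> {d \<in> D. d m = 0}" "y \<in> {d \<in> D. d m = 0}"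
    thus "(\<lambda>i. x i + y i) \<in> {d \<in> D. d m = 0}" using add by simp
  next
    fix a x assume "x \<in> {d \<in> D. d m = 0}"
    thus "(\<lambda>i. a * x i) \<in> {d \<in> D. d m = 0}" using sc by simp
  qed
qed

lemma sep:
  fixes D :: "(nat \<Rightarrow> 'a::field) set"
  assumes "linear_code m D" "v \<in> vecs m" "v \<notin> D"
  shows "\<exists>y\<in>vecs m. (\<forall>d\<in>D. (\<Sum>i<m. d i * y i) = 0) \<and> (\<Sum>i<m. v i * y i) \<noteq> 0"
  using assms
proof (induction m arbitrary: D v)
  case 0
  hence "v = (\<lambda>i. 0)" by (auto simp: vecs_def)
  thus ?case using 0 by (simp add: linear_code_def)
next
  case (Suc m)
  have add: "\<forall>x\<in>D. \<forall>y\<in>D. (\<lambda>i. x i + y i) \<in> D" and sc: "\<forall>a. \<forall>x\<in>D. (\<lambda>i. a * x i) \<in> D"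
    and sub: "D \<subseteq> vecs (Suc m)" and z: "(\<lambda>i. 0) \<in> D"
    using Suc.prems(1) unfolding linear_code_def by auto
  show ?case
  proof (cases "\<forall>d\<in>D. d m = 0")
    case True
    show ?thesis
    proof (cases "v m = 0")
      case False
      let ?y = "(\<lambda>l. if l = m then 1 else 0) :: nat \<Rightarrow> 'a"
      have "?y \<in> vecs (Suc m)" by (simp add: vecs_def)
      moreover have "\<forall>d\<in>D. (\<Sum>i<Suc m. d i * ?y i) = 0" using True
        by (simp add: sum.lessThan_Suc)
      moreover have "(\<Sum>i<Suc m. v i * ?y i) \<noteq> 0" using False
        by (simp add: sum.lessThan_Suc)
      ultimately show ?thesis by - (rule bexI[where x="?y"], (rule conjI)?, assumption+)
    next
      case vm: True
      have "{d\<in>D. d m = 0} = D" using True by blast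
      hence "linear_code m D" using lc_restrict[OF Suc.prems(1)] by simp
      moreover have "v \<in> vecs m" using Suc.prems(2) vm vecs_Suc by blast
      ultimately obtain y where y: "y \<in> vecs m" "\<forall>d\<in>D. (\<Sum>i<m. d i * y i) = 0"
        "(\<Sum>i<m. v i * y i) \<noteq> 0" using Suc.IH Suc.prems(3) by blast
      have ym: "y m = 0" using y(1) by (simp add: vecs_def)
      have "y \<in> vecs (Suc m)" using y(1) by (simp add: vecs_def)
      moreover have "\<forall>d\<in>D. (\<Sum>i<Suc m. d i * y i) = 0" using y(2) ym
        by (simp add: sum.lessThan_Suc)
      moreover have "(\<Sum>i<Suc m. v i * y i) \<noteq> 0" using y(3) ym
        by (simp add: sum.lessThan_Suc)
      ultimately show ?thesis by - (rule bexI[where x="y"], (rule conjI)?, assumption+)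
    qed
  next
    case False
    then obtain d0 where d0: "d0 \<in> D" "d0 m \<noteq> 0" by blast
    define e where "e = (\<lambda>i. (1 / d0 m) * d0 i)"
    have eD: "e \<in> D" unfolding e_def using sc d0 by blast
    have em: "e m = 1" using d0 by (simp add: e_def)
    define D' where "D' = {d\<in>D. d m = 0}"
    have lin': "linear_code m D'"
      using lc_restrict[OF Suc.prems(1)] unfolding D'_def .
    define v' where "v' = (\<lambda>i. v i - v m * e i)"
    have dD: "(\<lambda>i. d i - c * e i) \<in> D" if "d \<in> D" for d c
    proof -
      have "(\<lambda>i. (- c) * e i) \<in> D" using sc eD by blast
      from add[rule_format, OF that this] show ?thesis by simp
    qed
    have "e \<in> vecs (Suc m)" using eD sub by blast
    hence "v' \<in> vecs (Suc m)" using Suc.prems(2) by (simp add: vecs_def v'_def)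
    moreover have "v' m = 0" using em by (simp add: v'_def)
    ultimately have v'v: "v' \<in> vecs m" using vecs_Suc by blast
    have "v' \<notin> D'"
    proof
      assume "v' \<in> D'"
      hence "v' \<in> D" by (simp add: D'_def)
      have "(\<lambda>i. v m * e i) \<in> D" using sc eD by blast
      from add[rule_format, OF \<open>v' \<in> D\<close> this] have "v \<in> D" by (simp add: v'_def)
      thus False using Suc.prems(3) by blast
    qed
    then obtain z where z: "z \<in> vecs m" "\<forall>d\<in>D'. (\<Sum>i<m. d i * z i) = 0"
        "(\<Sum>i<m. v' i * z i) \<noteq> 0" using Suc.IH lin' v'v by blast
    define t where "t = - (\<Sum>i<m. e i * z i)"
    define y where "y = z(m := t)"
    have "y \<in> vecs (Suc m)" using z(1) by (simp add: vecs_def y_def)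
    moreover have "\<forall>d\<in>D. (\<Sum>i<Suc m. d i * y i) = 0"
    proof
      fix d assume that: "d \<in> D"
      show "(\<Sum>i<Suc m. d i * y i) = 0"
    proof -
      have "(\<lambda>i. d i - d m * e i) \<in> D'" using dD[OF that] em by (simp add: D'_def)
      from z(2)[rule_format, OF this] have "(\<Sum>i<m. (d i - d m * e i) * z i) = 0" by simp
      hence "(\<Sum>i<m. d i * z i) = d m * (\<Sum>i<m. e i * z i)"
        by (simp add: algebra_simps sum_subtractf sum_distrib_left)
      thus ?thesis unfolding y_def sum_upd t_def by simp
    qed
    qed
    moreover have "(\<Sum>i<Suc m. v i * y i) \<noteq> 0"
    proof -
      have "(\<Sum>i<m. v i * z i) = (\<Sum>i<m. v' i * z i) + v m * (\<Sum>i<m. e i * z i)"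
        by (simp add: v'_def algebra_simps sum_subtractf sum_distrib_left)
      thus ?thesis unfolding y_def sum_upd t_def using z(3) by simp
    qed
    ultimately show ?thesis by - (rule bexI[where x="y"], (rule conjI)?, assumption+)
  qed
qed




lemma sum_ind: "finite S \<Longrightarrow> j \<in> S \<Longrightarrow> (\<Sum>i\<in>S. a i * (if i = j then 1 else 0)) = (a j :: 'a::semiring_1)"
proof -
  assume "finite S" "j \<in> S"
  have "(\<Sum>i\<in>S. a i * (if i = j then 1 else 0)) = (\<Sum>i\<in>S. if i = j then a i else 0)"
    by (rule sum.cong) auto
  also have "\<dots> = a j" using \<open>finite S\<close> \<open>j \<in> S\<close> by simp
  finally show ?thesis .
qed

definition uv :: "nat \<Rightarrow> nat \<Rightarrow> 'a::{zero,one}" where "uv p = (\<lambda>l. if l = p then 1 else 0)"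

definition Q :: "(nat \<Rightarrow> 'a::zero) set \<Rightarrow> nat \<Rightarrow> nat \<Rightarrow> bool" where
  "Q C i j \<longleftrightarrow> (\<exists>c\<in>C. c i \<noteq> 0 \<and> c j \<noteq> 0 \<and> (\<forall>l. l \<noteq> i \<and> l \<noteq> j \<longrightarrow> c l = 0))"

locale code =
  fixes n :: nat and C :: "(nat \<Rightarrow> 'a::{finite,field}) set"
  assumes lin: "linear_code n C" and md: "has_min_dist n C 2"
begin

lemma sub: "C \<subseteq> vecs n" using lin by (simp add: linear_code_def)
lemma finC: "finite C" using sub finite_vecs finite_subset by blast
lemma zC: "(\<lambda>i. 0) \<in> C" using lin by (simp add: linear_code_def)

lemma n2: "2 \<le> n"
proof -
  obtain x y where "x \<in> C" "y \<in> C" "hdist n x y = 2" using md unfolding has_min_dist_def by blast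
  moreover have "hdist n x y \<le> card {..<n}" unfolding hdist_def by (rule card_mono) auto
  ultimately show ?thesis by simp
qed

lemma single: "x \<in> C \<Longrightarrow> \<forall>l. l \<noteq> p \<longrightarrow> x l = 0 \<Longrightarrow> x = (\<lambda>i. 0)"
  using wt_single[OF lin md] by blast

lemma uv_notin: "uv p \<notin> C"
proof
  assume "uv p \<in> C"
  hence "(uv p :: nat \<Rightarrow> 'a) = (\<lambda>i. 0)" using single[of "uv p" p] by (simp add: uv_def)
  from fun_cong[OF this, of p] show False by (simp add: uv_def)
qed

lemma uv_vecs: "p < n \<Longrightarrow> uv p \<in> vecs n" by (simp add: uv_def vecs_def)

lemma cond_i_Q: "cond_i n C \<longleftrightarrow> (\<forall>i j. i < n \<and> j < n \<and> i \<noteq> j \<longrightarrow> Q C i j)"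
proof
  assume a: "cond_i n C"
  show "\<forall>i j. i < n \<and> j < n \<and> i \<noteq> j \<longrightarrow> Q C i j"
  proof (intro allI impI)
    fix i j assume ij: "i < n \<and> j < n \<and> i \<noteq> j"
    then obtain c where c: "c \<in> C" "supp n c = {i, j}" using a unfolding cond_i_def by blast
    have "c i \<noteq> 0" "c j \<noteq> 0" using c(2) unfolding supp_def by blast+
    moreover have "\<forall>l. l \<noteq> i \<and> l \<noteq> j \<longrightarrow> c l = 0"
    proof (intro allI impI)
      fix l assume "l \<noteq> i \<and> l \<noteq> j"
      thus "c l = 0" using c sub unfolding supp_def vecs_def
        by (cases "l < n") auto
    qed
    ultimately show "Q C i j" using c(1) unfolding Q_def by blast
  qed
next
  assume a: "\<forall>i j. i < n \<and> j < n \<and> i \<noteq> j \<longrightarrow> Q C i j"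
  show "cond_i n C" unfolding cond_i_def
  proof (intro allI impI)
    fix i j assume ij: "i < n \<and> j < n \<and> i \<noteq> j"
    then obtain c where c: "c \<in> C" "c i \<noteq> 0" "\<forall>l. l \<noteq> i \<and> l \<noteq> j \<longrightarrow> c l = 0"
      using a unfolding Q_def by blast
    have "c \<noteq> (\<lambda>i. 0)" using c(2) by auto
    thus "\<exists>c\<in>C. wt n c = 2 \<and> supp n c = {i, j}"
      using wt_pair[OF lin md c(1) _ c(3)] ij c(1) by blast
  qed
qed

lemma iii_i:
  assumes card: "card C = CARD('a) ^ (n - 1)"
  shows "cond_i n C"
  unfolding cond_i_Q
proof (intro allI impI)
  fix i j assume ij: "i < n \<and> j < n \<and> i \<noteq> j"
  define \<rho> where "\<rho> = (\<lambda>c::nat \<Rightarrow> 'a. (\<lambda>l. if l = i \<or> l = j then 0 else c l))"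
  define S where "S = {..<n} - {i, j}"
  have fS: "finite S" by (simp add: S_def)
  have cS: "card S = n - 2" using ij by (simp add: S_def card_Diff_subset)
  let ?Z = "{x::nat \<Rightarrow> 'a. \<forall>l. l \<notin> S \<longrightarrow> x l = 0}"
  have img: "\<rho> ` C \<subseteq> ?Z"
  proof (safe)
    fix c l assume "c \<in> C" "l \<notin> S"
    thus "\<rho> c l = 0" using sub unfolding \<rho>_def S_def vecs_def by auto
  qed
  have q2: "2 \<le> CARD('a)"
  proof -
    have "card {0::'a, 1} \<le> CARD('a)" by (rule card_mono) simp_all
    thus ?thesis by simp
  qed
  have "\<not> inj_on \<rho> C"
  proof
    assume "inj_on \<rho> C"
    hence "card C \<le> card ?Z" using card_inj_on_le img card_supp_vecs(2)[OF fS] by blast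
    hence "CARD('a) ^ (n - 1) \<le> CARD('a) ^ (n - 2)" using card card_supp_vecs(1)[OF fS, where 'a='a] cS by simp
    moreover have "CARD('a) ^ (n - 2) < CARD('a) ^ (n - 1)"
      using q2 n2 by (intro power_strict_increasing) auto
    ultimately show False by simp
  qed
  then obtain c c' where cc: "c \<in> C" "c' \<in> C" "\<rho> c = \<rho> c'" "c \<noteq> c'"
    unfolding inj_on_def by blast
  define d where "d = (\<lambda>l. c l - c' l)"
  have dC: "d \<in> C" unfolding d_def by (rule lc_sub[OF lin cc(1,2)])
  have dz: "\<forall>l. l \<noteq> i \<and> l \<noteq> j \<longrightarrow> d l = 0"
  proof (intro allI impI)
    fix l assume "l \<noteq> i \<and> l \<noteq> j"
    thus "d l = 0" using fun_cong[OF cc(3), of l] by (simp add: \<rho>_def d_def)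
  qed
  have "d \<noteq> (\<lambda>l. 0)" using cc(4) by (auto simp: d_def fun_eq_iff)
  then have "d i \<noteq> 0 \<or> d j \<noteq> 0" using dz by (auto simp: fun_eq_iff)
  moreover have "d i \<noteq> 0" "d j \<noteq> 0"
  proof -
    show "d i \<noteq> 0"
    proof
      assume "d i = 0" hence "d = (\<lambda>l. 0)" using single[OF dC, of j] dz by metis
      thus False using \<open>d \<noteq> (\<lambda>l. 0)\<close> by simp
    qed
    show "d j \<noteq> 0"
    proof
      assume "d j = 0" hence "d = (\<lambda>l. 0)" using single[OF dC, of i] dz by metis
      thus False using \<open>d \<noteq> (\<lambda>l. 0)\<close> by simp
    qed
  qed
  ultimately show "Q C i j" unfolding Q_def using dC dz by blast
qed

end



definition GG :: "nat \<Rightarrow> (nat \<Rightarrow> 'a::field) \<Rightarrow> nat \<Rightarrow> nat \<Rightarrow> 'a" where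
  "GG n h = (\<lambda>i j. if j < n - 1 then (if i = j then 1 else 0) else if j = n - 1 then h i else 0)"

definition FF :: "nat \<Rightarrow> (nat \<Rightarrow> 'a::field) \<Rightarrow> (nat \<Rightarrow> 'a) \<Rightarrow> nat \<Rightarrow> 'a" where
  "FF n h a = (\<lambda>j. if j < n then (\<Sum>i<n-1. a i * GG n h i j) else 0)"

lemma row_space_FF: "row_space n (n - 1) (GG n h) = range (FF n h)"
  unfolding row_space_def FF_def by blast

lemma FF_low: "j < n - 1 \<Longrightarrow> FF n h a j = a j"
proof -
  assume j: "j < n - 1"
  have "FF n h a j = (\<Sum>i<n-1. a i * (if i = j then 1 else 0))"
    using j by (simp add: FF_def GG_def)
  also have "\<dots> = a j" using j by (simp add: sum_ind)
  finally show ?thesis .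
qed

lemma FF_last: "0 < n \<Longrightarrow> FF n h a (n - 1) = (\<Sum>i<n-1. a i * h i)"
  by (simp add: FF_def GG_def)

lemma FF_high: "n \<le> j \<Longrightarrow> FF n h a j = 0"
  by (simp add: FF_def)

lemma FF_restrict: "FF n h a = FF n h (\<lambda>i. if i < n - 1 then a i else 0)"
  unfolding FF_def by (intro ext) (auto intro!: sum.cong)

lemma card_rs: "card (row_space n (n - 1) (GG n h) :: (nat \<Rightarrow> 'a::{finite,field}) set) = CARD('a) ^ (n - 1)"
proof -
  have eq: "range (FF n h) = FF n h ` vecs (n - 1)"
  proof
    show "range (FF n h) \<subseteq> FF n h ` vecs (n - 1)"
    proof
      fix x assume "x \<in> range (FF n h)"
      then obtain a where "x = FF n h a" by blast
      hence "x = FF n h (\<lambda>i. if i < n - 1 then a i else 0)" using FF_restrict by metis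
      moreover have "(\<lambda>i. if i < n - 1 then a i else 0) \<in> vecs (n - 1)" by (simp add: vecs_def)
      ultimately show "x \<in> FF n h ` vecs (n - 1)" by blast
    qed
  qed blast
  have inj: "inj_on (FF n h) (vecs (n - 1))"
  proof
    fix a b assume ab: "a \<in> vecs (n - 1)" "b \<in> vecs (n - 1)" "FF n h a = FF n h b"
    show "a = b"
    proof
      fix j show "a j = b j"
      proof (cases "j < n - 1")
        case True thus ?thesis using FF_low[OF True, of h a] FF_low[OF True, of h b] ab(3) by simp
      next
        case False thus ?thesis using ab(1,2) by (simp add: vecs_def)
      qed
    qed
  qed
  show ?thesis unfolding row_space_FF eq card_image[OF inj] card_vecs ..
qed

context code begin

lemma i_iv: assumes ci: "cond_i n C" shows "cond_iv n C"
proof -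
  have nn: "2 \<le> n" by (rule n2)
  have "\<forall>i. \<exists>b. i < n - 1 \<longrightarrow> b \<noteq> 0 \<and> (\<lambda>l. if l = i then 1 else if l = n - 1 then b else 0) \<in> C"
  proof
    fix i show "\<exists>b. i < n - 1 \<longrightarrow> b \<noteq> 0 \<and> (\<lambda>l. if l = i then 1 else if l = n - 1 then b else 0) \<in> C"
    proof (cases "i < n - 1")
      case True
      have "i < n \<and> n - 1 < n \<and> i \<noteq> n - 1" using True nn by simp
      hence "Q C i (n - 1)" using ci unfolding cond_i_Q by blast
      then obtain c where c: "c \<in> C" "c i \<noteq> 0" "c (n - 1) \<noteq> 0"
        "\<forall>l. l \<noteq> i \<and> l \<noteq> n - 1 \<longrightarrow> c l = 0"
        unfolding Q_def by blast
      have "(\<lambda>l. (1 / c i) * c l) \<in> C" using lc_scale[OF lin c(1)] .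
      moreover have "(\<lambda>l. (1 / c i) * c l) = (\<lambda>l. if l = i then 1 else if l = n - 1 then c (n - 1) / c i else 0)"
        using c(2,4) True by (auto simp: fun_eq_iff)
      ultimately show ?thesis using c(2,3) by (intro exI[of _ "c (n - 1) / c i"]) auto
    qed auto
  qed
  then obtain h where h: "\<And>i. i < n - 1 \<Longrightarrow> h i \<noteq> 0 \<and> (\<lambda>l. if l = i then 1 else if l = n - 1 then h i else 0) \<in> C"
    by metis
  have rsC: "FF n h a \<in> C" for a
  proof -
    have "FF n h a = (\<lambda>j. \<Sum>i\<in>{..<n-1}. (\<lambda>l. a i * (if l = i then 1 else if l = n - 1 then h i else 0)) j)"
    proof
      fix j show "FF n h a j = (\<Sum>i\<in>{..<n-1}. (\<lambda>l. a i * (if l = i then 1 else if l = n - 1 then h i else 0)) j)"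
      proof (cases "j < n")
        case True thus ?thesis unfolding FF_def GG_def by (auto intro!: sum.cong)
      next
        case False thus ?thesis unfolding FF_def GG_def by (auto intro!: sum.neutral)
      qed
    qed
    moreover have "\<forall>i\<in>{..<n-1}. (\<lambda>l. a i * (if l = i then 1 else if l = n - 1 then h i else 0)) \<in> C"
    proof
      fix i assume "i \<in> {..<n-1}" hence "i < n - 1" by simp
      from lc_scale[OF lin conjunct2[OF h[OF this]]]
      show "(\<lambda>l. a i * (if l = i then 1 else if l = n - 1 then h i else 0)) \<in> C" .
    qed
    from lc_sum[OF lin finite_lessThan this]
    have "(\<lambda>j. \<Sum>i\<in>{..<n-1}. (\<lambda>l. a i * (if l = i then 1 else if l = n - 1 then h i else 0)) j) \<in> C" .
    ultimately show ?thesis by simp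
  qed
  have "C = row_space n (n - 1) (GG n h)"
  proof
    show "row_space n (n - 1) (GG n h) \<subseteq> C" unfolding row_space_FF using rsC by blast
  next
    show "C \<subseteq> row_space n (n - 1) (GG n h)"
    proof
      fix c assume c: "c \<in> C"
      define d where "d = (\<lambda>l. c l - FF n h c l)"
      have dC: "d \<in> C" unfolding d_def by (rule lc_sub[OF lin c rsC])
      have "\<forall>l. l \<noteq> n - 1 \<longrightarrow> d l = 0"
      proof (intro allI impI)
        fix l assume l: "l \<noteq> n - 1"
        show "d l = 0"
        proof (cases "l < n - 1")
          case True thus ?thesis by (simp add: d_def FF_low)
        next
          case False hence "n \<le> l" using l by simp
          thus ?thesis using c sub by (auto simp: d_def FF_high vecs_def)
        qed
      qed
      hence "d = (\<lambda>i. 0)" using single[OF dC] by blast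
      hence "c = FF n h c" by (auto simp: d_def fun_eq_iff)
      thus "c \<in> row_space n (n - 1) (GG n h)" unfolding row_space_FF by blast
    qed
  qed
  thus ?thesis unfolding cond_iv_def GG_def using h by blast
qed

lemma iv_iii: assumes "cond_iv n C" shows "cond_iii n C"
proof -
  obtain h where "C = row_space n (n - 1) (GG n h)" using assms unfolding cond_iv_def GG_def by blast
  thus ?thesis unfolding cond_iii_def using card_rs by simp
qed

end



context code begin

definition PP :: "nat \<Rightarrow> (nat \<Rightarrow> 'a) \<Rightarrow> nat \<Rightarrow> bool" where
  "PP i c p \<longleftrightarrow> p < n \<and> p \<noteq> i \<and> c p \<noteq> 0 \<and> (\<forall>l. l \<noteq> i \<and> l \<noteq> p \<longrightarrow> c l = 0)"

lemma nb:
  assumes c: "c \<in> C" "hdist n (uv i) c = 1" "c \<noteq> (\<lambda>l. 0)" and i: "i < n"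
  shows "c i = 1 \<and> (\<exists>p. PP i c p)"
proof -
  from c(2) have "card {l. l < n \<and> uv i l \<noteq> c l} = 1" by (simp add: hdist_def)
  then obtain p where p: "{l. l < n \<and> uv i l \<noteq> c l} = {p}" by (rule card_1_singletonE)
  have "p \<in> {l. l < n \<and> uv i l \<noteq> c l}" using p by simp
  hence pn: "p < n" "uv i p \<noteq> c p" by simp_all
  have oth: "c l = uv i l" if "l < n" "l \<noteq> p" for l
  proof -
    have "l \<notin> {l. l < n \<and> uv i l \<noteq> c l}" using p that(2) by simp
    thus ?thesis using that(1) by simp
  qed
  have hi: "\<And>l. n \<le> l \<Longrightarrow> c l = 0" using c(1) sub by (auto simp: vecs_def)
  have "p \<noteq> i"
  proof
    assume "p = i"
    hence "\<forall>l. l \<noteq> i \<longrightarrow> c l = 0"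
      using oth hi by (metis uv_def not_le)
    hence "c = (\<lambda>l. 0)" using single[OF c(1)] by blast
    thus False using c(3) by simp
  qed
  have ci: "c i = 1" using oth[OF i] \<open>p \<noteq> i\<close> by (simp add: uv_def)
  have "PP i c p" unfolding PP_def
  proof (intro conjI allI impI)
    show "p < n" "p \<noteq> i" by fact+
    show "c p \<noteq> 0" using pn(2) \<open>p \<noteq> i\<close> by (simp add: uv_def)
    fix l assume "l \<noteq> i \<and> l \<noteq> p"
    thus "c l = 0" using oth hi by (cases "l < n") (auto simp: uv_def)
  qed
  thus ?thesis using ci by blast
qed

lemma PP_uniq: "PP i c p \<Longrightarrow> PP i c p' \<Longrightarrow> p = p'"
  unfolding PP_def by metis

lemma PP_inj: assumes "c \<in> C" "c' \<in> C" "c i = c' i" "PP i c p" "PP i c' p" shows "c = c'"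
proof -
  define d where "d = (\<lambda>l. c l - c' l)"
  have dC: "d \<in> C" unfolding d_def by (rule lc_sub[OF lin assms(1,2)])
  have "\<forall>l. l \<noteq> p \<longrightarrow> d l = 0"
  proof (intro allI impI)
    fix l assume "l \<noteq> p"
    thus "d l = 0" using assms(3-5) unfolding PP_def d_def by (cases "l = i") auto
  qed
  hence "d = (\<lambda>l. 0)" using single[OF dC] by blast
  thus ?thesis by (auto simp: d_def fun_eq_iff)
qed

lemma PP_S: assumes "c \<in> C" "c i = 1" "PP i c p" shows "hdist n (uv i) c = 1"
proof -
  have "{l. l < n \<and> uv i l \<noteq> c l} = {p}"
    using assms unfolding PP_def uv_def by auto
  thus ?thesis by (simp add: hdist_def)
qed

lemma zero_S: "i < n \<Longrightarrow> hdist n (uv i :: nat \<Rightarrow> 'a) (\<lambda>l. 0) = 1"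
proof -
  assume "i < n"
  hence "{l. l < n \<and> uv i l \<noteq> (0::'a)} = {i}" unfolding uv_def by auto
  thus ?thesis by (simp add: hdist_def)
qed

lemma card_S:
  assumes i: "i < n"
  shows "card {c\<in>C. hdist n (uv i) c = 1} = n \<longleftrightarrow> (\<forall>j<n. j \<noteq> i \<longrightarrow> Q C i j)"
proof -
  define S where "S = {c\<in>C. hdist n (uv i) c = 1}"
  define S' where "S' = S - {\<lambda>l. 0}"
  define T where "T = {..<n} - {i}"
  define \<phi> where "\<phi> = (\<lambda>c. SOME p. PP i c p)"
  have fS: "finite S" unfolding S_def using finC by simp
  have zS: "(\<lambda>l. 0) \<in> S" unfolding S_def using zC zero_S[OF i] by simp
  have cS: "card S = card S' + 1" unfolding S'_def using fS zS
    by (simp add: card_Diff_singleton) (metis card_0_eq empty_iff Suc_pred neq0_conv)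
  have S'p: "c \<in> C \<and> c i = 1 \<and> PP i c (\<phi> c)" if "c \<in> S'" for c
  proof -
    have "c \<in> C" "hdist n (uv i) c = 1" "c \<noteq> (\<lambda>l. 0)" using that by (auto simp: S'_def S_def)
    from nb[OF this i] have "c i = 1" "\<exists>p. PP i c p" by auto
    thus ?thesis using someI_ex[OF \<open>\<exists>p. PP i c p\<close>] \<open>c \<in> C\<close> by (simp add: \<phi>_def)
  qed
  have inj: "inj_on \<phi> S'"
  proof
    fix c c' assume "c \<in> S'" "c' \<in> S'" "\<phi> c = \<phi> c'"
    thus "c = c'" using S'p PP_inj by metis
  qed
  have img: "\<phi> ` S' \<subseteq> T" using S'p unfolding T_def PP_def by auto
  have cT: "card T = n - 1" using i by (simp add: T_def)
  have eqv: "\<phi> ` S' = T \<longleftrightarrow> (\<forall>j<n. j \<noteq> i \<longrightarrow> Q C i j)"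
  proof
    assume a: "\<phi> ` S' = T"
    show "\<forall>j<n. j \<noteq> i \<longrightarrow> Q C i j"
    proof (intro allI impI)
      fix j assume "j < n" "j \<noteq> i"
      hence "j \<in> \<phi> ` S'" using a by (simp add: T_def)
      then obtain c where "c \<in> S'" "j = \<phi> c" by blast
      hence c: "c \<in> C" "c i = 1" "PP i c j" using S'p by auto
      have "c i \<noteq> 0" using c(2) by simp
      thus "Q C i j" using c unfolding Q_def PP_def by blast
    qed
  next
    assume a: "\<forall>j<n. j \<noteq> i \<longrightarrow> Q C i j"
    show "\<phi> ` S' = T"
    proof
      show "T \<subseteq> \<phi> ` S'"
      proof
        fix j assume "j \<in> T"
        hence j: "j < n" "j \<noteq> i" by (auto simp: T_def)
        then obtain c where c: "c \<in> C" "c i \<noteq> 0" "c j \<noteq> 0" "\<forall>l. l \<noteq> i \<and> l \<noteq> j \<longrightarrow> c l = 0"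
          using a unfolding Q_def by blast
        define c' where "c' = (\<lambda>l. (1 / c i) * c l)"
        have c'C: "c' \<in> C" unfolding c'_def by (rule lc_scale[OF lin c(1)])
        have c'i: "c' i = 1" using c(2) by (simp add: c'_def)
        have P: "PP i c' j" using c j unfolding PP_def c'_def by auto
        have "c' \<in> S'" using PP_S[OF c'C c'i P] c'C c'i unfolding S'_def S_def
          by (auto simp: fun_eq_iff intro!: exI[of _ i])
        moreover have "\<phi> c' = j" using S'p[OF \<open>c' \<in> S'\<close>] P PP_uniq by blast
        ultimately show "j \<in> \<phi> ` S'" by blast
      qed
    qed (rule img)
  qed
  have "card S = n \<longleftrightarrow> card (\<phi> ` S') = n - 1"
    using cS card_image[OF inj] i by auto
  also have "\<dots> \<longleftrightarrow> \<phi> ` S' = T"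
  proof
    assume "card (\<phi> ` S') = n - 1"
    thus "\<phi> ` S' = T" using card_subset_eq[OF _ img] cT by (simp add: T_def)
  qed (simp add: cT)
  finally show ?thesis using eqv unfolding S_def by simp
qed

lemma dist1:
  assumes rho: "cov_rad n C = 1" and x: "x \<in> vecs n" "x \<notin> C"
  shows "dist_to n x C = 1"
proof -
  have "dist_to n x C \<le> cov_rad n C" unfolding cov_rad_def
    using x(1) finite_vecs by (intro Max_ge) auto
  moreover have "dist_to n x C \<noteq> 0"
  proof
    assume "dist_to n x C = 0"
    moreover have "dist_to n x C \<in> hdist n x ` C" unfolding dist_to_def
      using finC zC by (intro Min_in) auto
    ultimately obtain c where "c \<in> C" "hdist n x c = 0" by auto
    hence "x = c" using hdist_zero_eq x(1) sub by blast
    thus False using x(2) \<open>c \<in> C\<close> by simp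
  qed
  ultimately show ?thesis using rho by simp
qed

lemma ii_i: "cond_ii n C \<Longrightarrow> cond_i n C"
  unfolding cond_i_Q
proof (intro allI impI)
  fix i j assume a: "cond_ii n C" and ij: "i < n \<and> j < n \<and> i \<noteq> j"
  have "uv i \<in> vecs n - C" using uv_vecs uv_notin ij by blast
  hence "card {c\<in>C. hdist n (uv i) c = 1} = n" using a unfolding cond_ii_def by blast
  thus "Q C i j" using card_S ij by blast
qed

lemma i_ii:
  assumes rho: "cov_rad n C = 1" and cr: "completely_regular n C" and ci: "cond_i n C"
  shows "cond_ii n C"
  unfolding cond_ii_def
proof
  fix x assume x: "x \<in> vecs n - C"
  have n0: "0 < n" using n2 by simp
  have u: "(uv 0 :: nat \<Rightarrow> 'a) \<in> vecs n" "uv 0 \<notin> C" using uv_vecs[OF n0] uv_notin by auto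
  have "dist_to n x C = dist_to n (uv 0) C" using dist1[OF rho] x u by simp
  hence "card {c\<in>C. hdist n x c = 1} = card {c\<in>C. hdist n (uv 0) c = 1}"
    using cr x u(1) unfolding completely_regular_def by blast
  also have "\<dots> = n" using card_S[OF n0] ci n0 unfolding cond_i_Q by blast
  finally show "card {c\<in>C. hdist n x c = 1} = n" .
qed

end



lemma dotFF:
  assumes n: "0 < n"
  shows "(\<Sum>l<n. FF n h a l * y l) = (\<Sum>l<n-1. a l * (y l + h l * y (n - 1)))"
proof -
  have "{..<n} = insert (n - 1) {..<n-1}" using n by auto
  hence "(\<Sum>l<n. FF n h a l * y l) = FF n h a (n - 1) * y (n - 1) + (\<Sum>l<n-1. FF n h a l * y l)"
    by simp
  also have "(\<Sum>l<n-1. FF n h a l * y l) = (\<Sum>l<n-1. a l * y l)"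
    by (rule sum.cong) (auto simp: FF_low)
  also have "FF n h a (n - 1) = (\<Sum>l<n-1. a l * h l)" using FF_last[OF n] .
  finally show ?thesis
    by (simp add: algebra_simps sum.distrib sum_distrib_left)
qed

lemma vm_diag:
  assumes "j < n"
  shows "vec_mat n y (\<lambda>i j. if j = i then lam i else 0) j = y j * lam j"
proof -
  have "vec_mat n y (\<lambda>i j. if j = i then lam i else 0) j = (\<Sum>i<n. y i * (if j = i then lam i else 0))"
    using assms unfolding vec_mat_def by simp
  also have "\<dots> = (\<Sum>i<n. if i = j then y i * lam i else 0)"
    by (rule sum.cong) auto
  also have "\<dots> = y j * lam j" using assms by simp
  finally show ?thesis .
qed

context code begin

lemma iv_v: assumes "cond_iv n C" shows "cond_v n C"
proof -
  obtain h where h: "\<forall>i<n-1. h i \<noteq> 0" and Ceq: "C = range (FF n h)"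
    using assms unfolding cond_iv_def row_space_FF[symmetric] GG_def by blast
  have n0: "0 < n" using n2 by simp
  define lam where "lam = (\<lambda>l. if l < n - 1 then - (1 / h l) else (1::'a))"
  define M where "M = (\<lambda>i j. if j = i then lam i else (0::'a))"
  have mono: "monomial_matrix n M"
    unfolding monomial_matrix_def
    by (rule exI[of _ id], rule exI[of _ lam]) (auto simp: M_def lam_def h)
  have vm: "vec_mat n y M j = y j * lam j" if "j < n" for y j
    unfolding M_def using vm_diag[OF that] .
  have D1: "y i = - (h i * y (n - 1))" if y: "y \<in> dual_code n C" and i: "i < n - 1" for y i
  proof -
    have "FF n h (uv i) \<in> C" unfolding Ceq by simp
    hence "(\<Sum>l<n. FF n h (uv i) l * y l) = 0" using y unfolding dual_code_def by blast
    hence "(\<Sum>l<n-1. uv i l * (y l + h l * y (n - 1))) = 0" using dotFF[OF n0, of h "uv i" y] by simp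
    moreover have "(\<Sum>l<n-1. uv i l * (y l + h l * y (n - 1))) = (\<Sum>l<n-1. (y l + h l * y (n - 1)) * (if l = i then 1 else 0))"
      by (rule sum.cong) (auto simp: uv_def)
    moreover have "\<dots> = y i + h i * y (n - 1)" using i by (simp add: sum_ind)
    ultimately show ?thesis by (simp add: eq_neg_iff_add_eq_0)
  qed
  have "(\<lambda>x. vec_mat n x M) ` dual_code n C = repetition_code n"
  proof
    show "(\<lambda>x. vec_mat n x M) ` dual_code n C \<subseteq> repetition_code n"
    proof
      fix z assume "z \<in> (\<lambda>x. vec_mat n x M) ` dual_code n C"
      then obtain y where y: "y \<in> dual_code n C" and z: "z = vec_mat n y M" by blast
      have "z = (\<lambda>l. if l < n then y (n - 1) else 0)"
      proof
        fix l show "z l = (if l < n then y (n - 1) else 0)"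
        proof (cases "l < n")
          case True
          show ?thesis
          proof (cases "l < n - 1")
            case True
            thus ?thesis using vm[OF \<open>l < n\<close>, of y] D1[OF y True] h z \<open>l < n\<close> by (simp add: lam_def)
          next
            case False
            hence "l = n - 1" using \<open>l < n\<close> by simp
            thus ?thesis using vm[OF \<open>l < n\<close>, of y] z \<open>l < n\<close> by (simp add: lam_def)
          qed
        next
          case False thus ?thesis using z by (simp add: vec_mat_def)
        qed
      qed
      thus "z \<in> repetition_code n" unfolding repetition_code_def by blast
    qed
  next
    show "repetition_code n \<subseteq> (\<lambda>x. vec_mat n x M) ` dual_code n C"
    proof
      fix z :: "nat \<Rightarrow> 'a" assume "z \<in> repetition_code n"
      then obtain t :: 'a where z: "z = (\<lambda>i. if i < n then t else 0)" unfolding repetition_code_def by blast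
      define y where "y = (\<lambda>l. if l < n - 1 then - (h l * t) else if l = n - 1 then t else 0)"
      have "y \<in> dual_code n C" unfolding dual_code_def
      proof (intro CollectI conjI ballI)
        show "y \<in> vecs n" using n0 unfolding y_def vecs_def by auto
        fix c assume "c \<in> C"
        then obtain a where "c = FF n h a" unfolding Ceq by blast
        hence "(\<Sum>i<n. c i * y i) = (\<Sum>l<n-1. a l * (y l + h l * y (n - 1)))" using dotFF[OF n0, of h a y] by simp
        also have "\<dots> = 0" by (rule sum.neutral) (auto simp: y_def)
        finally show "(\<Sum>i<n. c i * y i) = 0" .
      qed
      moreover have "vec_mat n y M = z"
      proof
        fix l show "vec_mat n y M l = z l"
        proof (cases "l < n")
          case True
          show ?thesis
          proof (cases "l < n - 1")
            case True
            thus ?thesis using vm[OF \<open>l < n\<close>, of y] h z \<open>l < n\<close> by (simp add: lam_def y_def)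
          next
            case False
            hence "l = n - 1" using \<open>l < n\<close> by simp
            thus ?thesis using vm[OF \<open>l < n\<close>, of y] z n0 \<open>l < n\<close> by (simp add: lam_def y_def)
          qed
        next
          case False thus ?thesis using z by (simp add: vec_mat_def)
        qed
      qed
      ultimately show "z \<in> (\<lambda>x. vec_mat n x M) ` dual_code n C" by blast
    qed
  qed
  thus ?thesis unfolding cond_v_def lin_equiv_def using mono by blast
qed

lemma v_i: assumes "cond_v n C" shows "cond_i n C"
proof -
  obtain M where mono: "monomial_matrix n M" and im: "(\<lambda>x. vec_mat n x M) ` dual_code n C = repetition_code n"
    using assms unfolding cond_v_def lin_equiv_def by blast
  obtain \<sigma> lam where bij: "bij_betw \<sigma> {..<n} {..<n}" and lam: "\<forall>i<n. lam i \<noteq> 0"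
    and M: "\<forall>i<n. \<forall>j<n. M i j = (if j = \<sigma> i then lam i else 0)"
    using mono unfolding monomial_matrix_def by blast
  have sl: "\<sigma> l < n" if "l < n" for l using bij that by (auto simp: bij_betw_def)
  have injs: "inj_on \<sigma> {..<n}" using bij by (simp add: bij_betw_def)
  have vm: "vec_mat n y M (\<sigma> i) = y i * lam i" if i: "i < n" for y i
  proof -
    have "vec_mat n y M (\<sigma> i) = (\<Sum>l<n. y l * M l (\<sigma> i))" using sl[OF i] by (simp add: vec_mat_def)
    also have "\<dots> = (\<Sum>l<n. if l = i then y l * lam l else 0)"
    proof (rule sum.cong)
      fix l assume l: "l \<in> {..<n}"
      have "(\<sigma> i = \<sigma> l) = (l = i)" using injs l i by (auto dest: inj_onD)
      thus "y l * M l (\<sigma> i) = (if l = i then y l * lam l else 0)" using M l sl[OF i] by auto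
    qed simp
    also have "\<dots> = y i * lam i" using i by simp
    finally show ?thesis .
  qed
  define w where "w = (\<lambda>l. 1 / lam l)"
  have w0: "w l \<noteq> 0" if "l < n" for l using lam that by (simp add: w_def)
  have dualf: "\<exists>t. \<forall>l<n. y l = t * w l" if y: "y \<in> dual_code n C" for y
  proof -
    have "vec_mat n y M \<in> repetition_code n" using im y by blast
    then obtain t :: 'a where t: "vec_mat n y M = (\<lambda>l. if l < n then t else 0)" unfolding repetition_code_def by blast
    have "y l = t * w l" if l: "l < n" for l
    proof -
      have "y l * lam l = t" using vm[OF l, of y] t sl[OF l] by simp
      thus ?thesis using lam l by (auto simp: w_def field_simps)
    qed
    thus ?thesis by blast
  qed
  show ?thesis unfolding cond_i_Q
  proof (intro allI impI)
    fix i j assume ij: "i < n \<and> j < n \<and> i \<noteq> j"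
    define c where "c = (\<lambda>l. if l = i then w j else if l = j then - w i else 0)"
    have cv: "c \<in> vecs n" using ij by (auto simp: c_def vecs_def)
    have "c \<in> C"
    proof (rule ccontr)
      assume "c \<notin> C"
      from sep[OF lin cv this] obtain y where y: "y \<in> vecs n" "\<forall>d\<in>C. (\<Sum>i<n. d i * y i) = 0"
        "(\<Sum>i<n. c i * y i) \<noteq> 0" by blast
      have "y \<in> dual_code n C" using y(1,2) unfolding dual_code_def by blast
      then obtain t where t: "\<forall>l<n. y l = t * w l" using dualf by blast
      have "(\<Sum>l<n. c l * y l) = (\<Sum>l\<in>{i, j}. c l * y l)"
        by (rule sum.mono_neutral_right) (use ij in \<open>auto simp: c_def\<close>)
      also have "\<dots> = 0" using ij t by (simp add: c_def algebra_simps)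
      finally show False using y(3) by simp
    qed
    moreover have "c i \<noteq> 0" "c j \<noteq> 0" using ij w0 by (auto simp: c_def)
    moreover have "\<forall>l. l \<noteq> i \<and> l \<noteq> j \<longrightarrow> c l = 0" by (simp add: c_def)
    ultimately show "Q C i j" unfolding Q_def by blast
  qed
qed

end


theorem lemma3p5:
  fixes C :: "(nat \<Rightarrow> 'a::{finite,field}) set" and n k :: nat
  assumes lin: "linear_code n C"
    and dim: "card C = CARD('a) ^ k"
    and md: "has_min_dist n C 2"
    and cr: "completely_regular n C"
    and rho: "cov_rad n C = 1"
  shows "(cond_i n C \<longleftrightarrow> cond_ii n C) \<and> (cond_ii n C \<longleftrightarrow> cond_iii n C) \<and>
         (cond_iii n C \<longleftrightarrow> cond_iv n C) \<and> (cond_iv n C \<longleftrightarrow> cond_v n C)"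
proof -
  interpret code n C using lin md by unfold_locales
  have a: "cond_i n C \<longleftrightarrow> cond_ii n C" using ii_i i_ii[OF rho cr] by blast
  have b: "cond_i n C \<longleftrightarrow> cond_iii n C"
    using i_iv iv_iii iii_i unfolding cond_iii_def by blast
  have c: "cond_i n C \<longleftrightarrow> cond_iv n C" using i_iv iv_iii iii_i unfolding cond_iii_def by blast
  have d: "cond_iv n C \<longleftrightarrow> cond_v n C" using iv_v v_i i_iv by blast
  show ?thesis using a b c d by blast
qed

end
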